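(* Let $(X_1,Y_1),\dots,(X_k,Y_k)$ be i.i.d. random vectors in $\mathbb R^2$ whose common density $f$ satisfies $f\in L_\infty(\mathbb R^2)$, $\|f\|_{L_\infty(\mathbb R^2)}\le C_0$, and $f=0$ outside the disk $B((0,0),R)$, where $R,C_0>0$. For $(x,y)\in B((0,0),R)$ let $Z(x,y)=\min_{1\le j\le k}\sqrt{(X_j-x)^2+(Y_j-y)^2}$. Then $$\min_{(x,y)\in B((0,0),R)}\mathbf E\big(Z(x,y)\big)\ge\frac{1}{4\pi RC_0(k+1)}.$$
   Context: $B((0,0),R)$ denotes the closed Euclidean disk of radius $R$ centered at the origin. *)

theory Defs
  imports "HOL-Probability.Probability"
begin

end

theory Submission
  imports Defs
begin

lemma aux: "(a::real) > 0 \<Longrightarrow> b > 0 \<Longrightarrow> c > 0 \<Longrightarrow> K > 0 \<Longrightarrow> n * a * b * (1 / (2 * b * a * c * K))^2 = n / (4 * (a * b * c^2) * K^2)"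
  by (simp add: power_one_over power_mult_distrib field_simps power2_eq_square)

lemma ball_bound:
  fixes g :: "'a \<Rightarrow> real \<times> real"
  assumes D: "distributed M lborel g (\<lambda>z. ennreal (f z))"
   and ae: "AE z in lborel. f z \<le> C0" and C0: "C0 > 0" and r: "r \<ge> 0"
  shows "emeasure M (g -` cball c r \<inter> space M) \<le> ennreal (C0 * (pi * r^2))"
proof -
  have "emeasure M (g -` cball c r \<inter> space M) = (\<integral>\<^sup>+z. ennreal (f z) * indicator (cball c r) z \<partial>lborel)"
    using distributed_emeasure[OF D] by simp
  also have "\<dots> \<le> (\<integral>\<^sup>+z. ennreal C0 * indicator (cball c r) z \<partial>lborel)"
    apply (rule nn_integral_mono_AE) using ae
    by eventually_elim (auto simp: indicator_def intro: ennreal_leI)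
  also have "\<dots> = ennreal C0 * emeasure lborel (cball c r)"
    by (rule nn_integral_cmult_indicator) simp
  also have "emeasure lborel (cball c r) = ennreal (pi * r^2)"
    using emeasure_cball[OF r, of c] unit_ball_vol_2 by (simp add: power2_eq_square)
  finally show ?thesis using C0 by (simp add: ennreal_mult)
qed

lemma support_one:
  fixes g :: "'a \<Rightarrow> real \<times> real"
  assumes P: "prob_space M" and D: "distributed M lborel g (\<lambda>z. ennreal (f z))"
   and supp: "\<And>z. z \<notin> S \<Longrightarrow> f z = 0" and S: "S \<in> sets borel"
  shows "emeasure M (g -` S \<inter> space M) = 1"
    and "emeasure M (g -` (- S) \<inter> space M) = 0"
proof -
  interpret prob_space M by fact
  have "emeasure M (g -` S \<inter> space M) = (\<integral>\<^sup>+z. ennreal (f z) * indicator S z \<partial>lborel)"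
    using distributed_emeasure[OF D] S by simp
  also have "\<dots> = (\<integral>\<^sup>+z. ennreal (f z) * indicator UNIV z \<partial>lborel)"
    by (rule nn_integral_cong) (auto simp: indicator_def supp)
  also have "\<dots> = emeasure M (g -` UNIV \<inter> space M)"
    using distributed_emeasure[OF D, of UNIV] by simp
  also have "\<dots> = 1" by (simp add: emeasure_space_1)
  finally show "emeasure M (g -` S \<inter> space M) = 1" .
  have "emeasure M (g -` (-S) \<inter> space M) = (\<integral>\<^sup>+z. ennreal (f z) * indicator (-S) z \<partial>lborel)"
    using distributed_emeasure[OF D] S by simp
  also have "\<dots> = (\<integral>\<^sup>+(z::real\<times>real). 0 \<partial>lborel)"
    by (rule nn_integral_cong) (auto simp: indicator_def supp)
  finally show "emeasure M (g -` (- S) \<inter> space M) = 0" by simp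
qed

theorem mainTheorem13:
  fixes M :: "'a measure"
    and X Y :: "nat \<Rightarrow> 'a \<Rightarrow> real"
    and f :: "real \<times> real \<Rightarrow> real"
    and k :: nat and R C\<^sub>0 :: real
  assumes "prob_space M"
    and "k \<ge> 1"
    and "R > 0" and "C\<^sub>0 > 0"
    and "f \<in> borel_measurable lborel"
    and "\<And>z. f z \<ge> 0"
    and "AE z in lborel. f z \<le> C\<^sub>0"
    and "\<And>z. z \<notin> cball (0::real \<times> real) R \<Longrightarrow> f z = 0"
    and "\<And>j. j \<in> {1..k} \<Longrightarrow>
           distributed M lborel (\<lambda>\<omega>. (X j \<omega>, Y j \<omega>)) (\<lambda>z. ennreal (f z))"
    and "prob_space.indep_vars M (\<lambda>_. borel) (\<lambda>j \<omega>. (X j \<omega>, Y j \<omega>)) {1..k}"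
  shows "\<forall>p \<in> cball (0::real \<times> real) R.
           prob_space.expectation M
             (\<lambda>\<omega>. Min ((\<lambda>j. dist (X j \<omega>, Y j \<omega>) p) ` {1..k}))
           \<ge> 1 / (4 * pi * R * C\<^sub>0 * (real k + 1))"
proof
  interpret P: prob_space M by fact
  fix p :: "real \<times> real" assume p: "p \<in> cball 0 R"
  define g where "g j = (\<lambda>\<omega>. (X j \<omega>, Y j \<omega>))" for j
  define Z where "Z \<omega> = Min ((\<lambda>j. dist (g j \<omega>) p) ` {1..k})" for \<omega>
  have D: "distributed M lborel (g j) (\<lambda>z. ennreal (f z))" if "j \<in> {1..k}" for j
    using assms(9)[OF that] by (simp add: g_def)
  have mg: "g j \<in> borel_measurable M" if "j \<in> {1..k}" for j
    using distributed_measurable[OF D[OF that]] by simp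
  have md: "(\<lambda>\<omega>. dist (g j \<omega>) p) \<in> borel_measurable M" if "j \<in> {1..k}" for j
    using mg[OF that] by measurable
  have mZ: "Z \<in> borel_measurable M"
    unfolding Z_def by (rule borel_measurable_Min) (use md in auto)
  have j1: "1 \<in> {1..k}" using assms(2) by simp
  have ne: "{1..k} \<noteq> {}" "finite {1..k}" using j1 by auto
  have Z0: "Z \<omega> \<ge> 0" for \<omega> unfolding Z_def using ne by (auto simp: Min_ge_iff)
  have S1: "emeasure M (g 1 -` cball 0 R \<inter> space M) = 1"
   and S0: "emeasure M (g 1 -` (- cball 0 R) \<inter> space M) = 0"
    using support_one[OF assms(1) D[OF j1], of "cball 0 R"] assms(8) by auto
  have "(1::ennreal) \<le> ennreal (C\<^sub>0 * (pi * R^2))"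
    using S1 ball_bound[OF D[OF j1] assms(7) assms(4), of R 0] assms(3) by simp
  hence sup: "1 \<le> C\<^sub>0 * pi * R^2"
    by (simp add: ennreal_le_iff2 mult.assoc) 
  have "AE \<omega> in M. g 1 \<omega> \<in> cball 0 R"
  proof (rule AE_I')
    show "g 1 -` (- cball 0 R) \<inter> space M \<in> null_sets M"
      using S0 measurable_sets[OF mg[OF j1], of "- cball 0 R"] by (auto simp: null_sets_def)
  qed auto
  hence aeZ: "AE \<omega> in M. norm (Z \<omega>) \<le> 2 * R"
  proof eventually_elim
    case (elim \<omega>)
    have "Z \<omega> \<le> dist (g 1 \<omega>) p" unfolding Z_def using ne j1 by (auto intro: Min_le)
    also have "\<dots> \<le> dist (g 1 \<omega>) 0 + dist 0 p" by (rule dist_triangle)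
    also have "\<dots> \<le> 2 * R" using elim p by (auto simp: dist_commute)
    finally show ?case using Z0[of \<omega>] by simp
  qed
  have intZ: "integrable M Z" by (rule P.integrable_const_bound[OF aeZ mZ])
  define t where "t = 1 / (2 * pi * C\<^sub>0 * R * (real k + 1))"
  have t0: "t > 0" unfolding t_def using assms(3,4) by auto
  define A where "A = {\<omega> \<in> space M. Z \<omega> \<le> t}"
  have Asets: "A \<in> sets M" unfolding A_def using mZ by measurable
  define B where "B j = g j -` cball p t \<inter> space M" for j
  have Bsets: "B j \<in> sets M" if "j \<in> {1..k}" for j
    unfolding B_def using measurable_sets[OF mg[OF that], of "cball p t"] by simp
  have AB: "A \<subseteq> (\<Union>j\<in>{1..k}. B j)"
  proof
    fix \<omega> assume "\<omega> \<in> A"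
    hence "\<omega> \<in> space M" "Min ((\<lambda>j. dist (g j \<omega>) p) ` {1..k}) \<le> t" by (auto simp: A_def Z_def)
    then obtain j where "j \<in> {1..k}" "dist (g j \<omega>) p \<le> t" using ne
      by (auto simp: Min_le_iff)
    thus "\<omega> \<in> (\<Union>j\<in>{1..k}. B j)" using \<open>\<omega> \<in> space M\<close> by (auto simp: B_def dist_commute)
  qed
  have Bm: "P.prob (B j) \<le> C\<^sub>0 * (pi * t^2)" if "j \<in> {1..k}" for j
  proof -
    have "ennreal (P.prob (B j)) \<le> ennreal (C\<^sub>0 * (pi * t^2))"
      using ball_bound[OF D[OF that] assms(7) assms(4), of t p] t0
      by (simp add: B_def P.emeasure_eq_measure)
    moreover have "0 \<le> C\<^sub>0 * (pi * t^2)" using assms(4) by simp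
    ultimately show ?thesis by (auto simp: ennreal_le_iff2)
  qed
  have "P.prob A \<le> P.prob (\<Union>j\<in>{1..k}. B j)"
    by (rule P.finite_measure_mono[OF AB]) (use Bsets in auto)
  also have "\<dots> \<le> (\<Sum>j\<in>{1..k}. P.prob (B j))"
    by (rule P.finite_measure_subadditive_finite) (use Bsets in auto)
  also have "\<dots> \<le> (\<Sum>j\<in>{1..k}. C\<^sub>0 * (pi * t^2))"
    by (rule sum_mono) (use Bm in auto)
  also have "\<dots> = real k * C\<^sub>0 * pi * t^2" by simp
  finally have PA: "P.prob A \<le> real k * C\<^sub>0 * pi * t^2" .
  have half: "real k * C\<^sub>0 * pi * t^2 \<le> 1/2"
  proof -
    have "real k * C\<^sub>0 * pi * t^2 = real k / (4 * (C\<^sub>0 * pi * R^2) * (real k + 1)^2)"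
      unfolding t_def using aux[of "C\<^sub>0" pi R "real k + 1" "real k"] assms(3,4) pi_gt_zero by simp
    also have "\<dots> \<le> real k / (4 * (real k + 1)^2)"
      using sup assms(3,4) pi_gt_zero by (intro divide_left_mono mult_right_mono) (auto)
    also have "\<dots> \<le> 1/2"
    proof -
      have "real k \<le> 2 * (real k + 1)^2" by (simp add: power2_eq_square algebra_simps)
      moreover have "0 < 4 * (real k + 1)^2" by simp
      ultimately show ?thesis by (simp add: divide_le_eq)
    qed
    finally show ?thesis .
  qed
  define h where "h \<omega> = t - t * indicator A \<omega>" for \<omega>
  have intA: "integrable M (indicator A :: 'a \<Rightarrow> real)"
    using Asets by (auto simp: integrable_indicator_iff P.emeasure_eq_measure)
  have inth: "integrable M h" unfolding h_def
    using Asets by (intro Bochner_Integration.integrable_diff integrable_mult_right) (auto simp: integrable_indicator_iff P.emeasure_eq_measure)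
  have "P.expectation h = t - t * P.prob A"
    unfolding h_def using Asets inth intA
    by (subst Bochner_Integration.integral_diff) (auto simp: P.prob_space)
  also have "\<dots> \<ge> t / 2" proof -
    have "t * P.prob A \<le> t * (1/2)" using PA half t0 by (intro mult_left_mono) auto
    thus ?thesis by simp
  qed
  also have "P.expectation h \<le> P.expectation Z"
  proof (rule integral_mono[OF inth intZ])
    fix \<omega> assume "\<omega> \<in> space M"
    thus "h \<omega> \<le> Z \<omega>" using Z0[of \<omega>] by (auto simp: h_def A_def indicator_def)
  qed
  finally have "t / 2 \<le> P.expectation Z" by simp
  moreover have "t / 2 = 1 / (4 * pi * R * C\<^sub>0 * (real k + 1))"
    unfolding t_def by (simp add: field_simps)
  ultimately have fin: "1 / (4 * pi * R * C\<^sub>0 * (real k + 1)) \<le> P.expectation Z" by simp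
  have Zeq: "(\<lambda>\<omega>. Min ((\<lambda>j. dist (X j \<omega>, Y j \<omega>) p) ` {1..k})) = Z"
    by (rule ext) (simp add: Z_def g_def)
  show "P.expectation (\<lambda>\<omega>. Min ((\<lambda>j. dist (X j \<omega>, Y j \<omega>) p) ` {1..k}))
           \<ge> 1 / (4 * pi * R * C\<^sub>0 * (real k + 1))"
    unfolding Zeq by (rule fin)
qed

end
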